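(* Consider the infinite-horizon dynamic multi-agent system described in the context and suppose Assumption B holds. Let $\mathbf x(0)\in\mathcal X_0$ and let $(\boldsymbol\lambda^\ast,\mathbf U^\ast,\mathbf E^\ast)$ be an infinite-horizon competitive equilibrium for $\mathbf x(0)$. Then there exists a time $\bar N(\mathbf x(0))$ such that $\lambda^\ast_t=0$ for all $t>\bar N(\mathbf x(0))$.
   Context: Infinite-horizon dynamic multi-agent system: $n$ agents $\mathcal V=\{1,\dots,n\}$, time set $\mathcal T=\{0,1,2,\dots\}$. Agent $i$ has state $\mathbf x_i(t)\in\mathbb R^d$, input $\mathbf u_i(t)\in\mathbb R^m$, dynamics $\mathbf x_i(t+1)=\mathbf A_i\mathbf x_i(t)+\mathbf B_i\mathbf u_i(t)$, utility $f_i:\mathbb R^d\times\mathbb R^m\to\mathbb R$, resource consumption $h_i:\mathbb R^m\to\mathbb R$, excess resource $a_i(t)\in\mathbb R$, traded resource $e_i(t)\in\mathbb R$; $C(t)=\sum_ia_i(t)$; $\mathbf x(t)=(\mathbf x_1(t),\dots,\mathbf x_n(t))\in\mathbb R^{nd}$ with given $\mathbf x(0)$; $\mathbf U_i,\mathbf E_i$ denote the sequences $(\mathbf u_i(t))_{t\ge0}$, $(e_i(t))_{t\ge0}$, and $\mathbf U,\mathbf E$ their collections over all agents. Assumption B: (i) each $f_i$ is concave and negative definite, i.e. $f_i(\mathbf 0,\mathbf 0)=0$ and $f_i(\mathbf x,\mathbf u)<0$ for $(\mathbf x,\mathbf u)\ne(\mathbf 0,\mathbf 0)$; (ii) each $h_i$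 is non-negative and convex; (iii) $h_i(\mathbf 0)=0$; (iv) there is $C>0$ with $C(t)\ge C$ for all $t\ge0$. (Under (i) all series $\sum_t f_i$ converge in $[-\infty,0]$.) An infinite-horizon competitive equilibrium for $\mathbf x(0)$ is a triple $(\boldsymbol\lambda^\ast,\mathbf U^\ast,\mathbf E^\ast)$, $\boldsymbol\lambda^\ast=(\lambda^\ast_t)_{t\ge0}$, such that (i) for each $i$, $(\mathbf U_i^\ast,\mathbf E_i^\ast)$ attains a finite maximum of $\sum_{t=0}^\infty[f_i(\mathbf x_i(t),\mathbf u_i(t))+\lambda^\ast_te_i(t)]$ subject to the dynamics and $e_i(t)\le a_i(t)-h_i(\mathbf u_i(t))$ for all $t$; (ii) $\sum_{i=1}^ne_i^\ast(t)=0$ for all $t$. The infinite-horizon social welfare maximization problem for $\mathbf x(0)$: maximize $\sum_{i=1}^n\sum_{t=0}^\infty f_i(\mathbf x_i(t),\mathbf u_i(t))$ over $(\mathbf U,\mathbf E)$ subject to the dynamics, $e_i(t)\le a_i(t)-h_i(\mathbf u_i(t))$ and $\sum_{i=1}^ne_i(t)=0$ for all $t\ge0$. The set of feasible initial conditions $\mathcal X_0$ consists of those $\mathbf x(0)$ for which this problem has an admissible $(\mathbf U,\mathbf E)$ and finite optimal value. *)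

theory Defs
  imports "HOL-Analysis.Analysis"
begin

primrec traj :: "real^'d^'d \<Rightarrow> real^'m^'d \<Rightarrow> real^'d \<Rightarrow> (nat \<Rightarrow> real^'m) \<Rightarrow> nat \<Rightarrow> real^'d" where
  "traj A B x0 u 0 = x0"
| "traj A B x0 u (Suc t) = A *v traj A B x0 u t + B *v u t"

definition agent_feasible :: "(real^'m \<Rightarrow> real) \<Rightarrow> (nat \<Rightarrow> real) \<Rightarrow> (nat \<Rightarrow> real^'m) \<Rightarrow> (nat \<Rightarrow> real) \<Rightarrow> bool" where
  "agent_feasible h a u e \<longleftrightarrow> (\<forall>t. e t \<le> a t - h (u t))"

definition agent_obj :: "(real^'d \<Rightarrow> real^'m \<Rightarrow> real) \<Rightarrow> real^'d^'d \<Rightarrow> real^'m^'d \<Rightarrow> real^'d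
    \<Rightarrow> (nat \<Rightarrow> real) \<Rightarrow> (nat \<Rightarrow> real^'m) \<Rightarrow> (nat \<Rightarrow> real) \<Rightarrow> nat \<Rightarrow> real" where
  "agent_obj f A B x0 lam u e t = f (traj A B x0 u t) (u t) + lam t * e t"

definition agent_optimal :: "(real^'d \<Rightarrow> real^'m \<Rightarrow> real) \<Rightarrow> (real^'m \<Rightarrow> real) \<Rightarrow> real^'d^'d \<Rightarrow> real^'m^'d
    \<Rightarrow> (nat \<Rightarrow> real) \<Rightarrow> real^'d \<Rightarrow> (nat \<Rightarrow> real) \<Rightarrow> (nat \<Rightarrow> real^'m) \<Rightarrow> (nat \<Rightarrow> real) \<Rightarrow> bool" where
  "agent_optimal f h A B a x0 lam u e \<longleftrightarrow>
     agent_feasible h a u e \<and> summable (agent_obj f A B x0 lam u e) \<and>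
     (\<forall>u' e'. agent_feasible h a u' e' \<and> summable (agent_obj f A B x0 lam u' e') \<longrightarrow>
        suminf (agent_obj f A B x0 lam u' e') \<le> suminf (agent_obj f A B x0 lam u e))"

definition competitive_equilibrium ::
  "('i::finite \<Rightarrow> real^'d \<Rightarrow> real^'m \<Rightarrow> real) \<Rightarrow> ('i \<Rightarrow> real^'m \<Rightarrow> real) \<Rightarrow> ('i \<Rightarrow> real^'d^'d) \<Rightarrow> ('i \<Rightarrow> real^'m^'d)
   \<Rightarrow> ('i \<Rightarrow> nat \<Rightarrow> real) \<Rightarrow> ('i \<Rightarrow> real^'d) \<Rightarrow> (nat \<Rightarrow> real) \<Rightarrow> ('i \<Rightarrow> nat \<Rightarrow> real^'m) \<Rightarrow> ('i \<Rightarrow> nat \<Rightarrow> real) \<Rightarrow> bool" where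
  "competitive_equilibrium f h A B a x0 lam U E \<longleftrightarrow>
     (\<forall>i. agent_optimal (f i) (h i) (A i) (B i) (a i) (x0 i) lam (U i) (E i)) \<and>
     (\<forall>t. (\<Sum>i\<in>UNIV. E i t) = 0)"

definition welfare_admissible :: "('i::finite \<Rightarrow> real^'m \<Rightarrow> real) \<Rightarrow> ('i \<Rightarrow> nat \<Rightarrow> real)
    \<Rightarrow> ('i \<Rightarrow> nat \<Rightarrow> real^'m) \<Rightarrow> ('i \<Rightarrow> nat \<Rightarrow> real) \<Rightarrow> bool" where
  "welfare_admissible h a U E \<longleftrightarrow>
     (\<forall>i. agent_feasible (h i) (a i) (U i) (E i)) \<and> (\<forall>t. (\<Sum>i\<in>UNIV. E i t) = 0)"

text \<open>Social welfare \<Sum>_i \<Sum>_t f_i, in the extended reals (the series of the nonpositive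
  terms f_i converge in [-\<infinity>,0]; written as minus a series of nonnegative terms).\<close>
definition welfare :: "('i::finite \<Rightarrow> real^'d \<Rightarrow> real^'m \<Rightarrow> real) \<Rightarrow> ('i \<Rightarrow> real^'d^'d) \<Rightarrow> ('i \<Rightarrow> real^'m^'d)
    \<Rightarrow> ('i \<Rightarrow> real^'d) \<Rightarrow> ('i \<Rightarrow> nat \<Rightarrow> real^'m) \<Rightarrow> ereal" where
  "welfare f A B x0 U =
     (\<Sum>i\<in>UNIV. - (\<Sum>t. ereal (- f i (traj (A i) (B i) (x0 i) (U i) t) (U i t))))"

definition feasible_init ::
  "('i::finite \<Rightarrow> real^'d \<Rightarrow> real^'m \<Rightarrow> real) \<Rightarrow> ('i \<Rightarrow> real^'m \<Rightarrow> real) \<Rightarrow> ('i \<Rightarrow> real^'d^'d) \<Rightarrow> ('i \<Rightarrow> real^'m^'d)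
   \<Rightarrow> ('i \<Rightarrow> nat \<Rightarrow> real) \<Rightarrow> ('i \<Rightarrow> real^'d) \<Rightarrow> bool" where
  "feasible_init f h A B a x0 \<longleftrightarrow>
     (\<exists>U E. welfare_admissible h a U E) \<and>
     \<bar>SUP UE\<in>{(U, E). welfare_admissible h a U E}. welfare f A B x0 (fst UE)\<bar> \<noteq> \<infinity>"

end

theory Submission
  imports Defs
begin

lemma concave_negdef_tendsto:
  fixes g :: "'a::euclidean_space \<Rightarrow> real" and p :: "nat \<Rightarrow> 'a"
  assumes conc: "concave_on UNIV g" and g0: "g 0 = 0" and gneg: "\<And>z. z \<noteq> 0 \<Longrightarrow> g z < 0"
    and lim: "(\<lambda>t. g (p t)) \<longlonglongrightarrow> 0"
  shows "p \<longlonglongrightarrow> 0"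
proof (rule tendstoI)
  fix r :: real assume r: "r > 0"
  have cont: "continuous_on UNIV g"
  proof -
    have "continuous_on UNIV (\<lambda>x. - g x)"
      using conc by (intro convex_on_continuous) (auto simp: concave_on_def)
    then have "continuous_on UNIV (\<lambda>x. - (- g x))" by (rule continuous_on_minus)
    then show ?thesis by simp
  qed
  obtain w :: 'a where w: "norm w = r" using vector_choose_size r by (metis less_imp_le)
  have "\<exists>q\<in>sphere 0 r. \<forall>y\<in>sphere 0 r. g y \<le> g q"
    apply (rule continuous_attains_sup)
    using w cont by (auto intro: continuous_on_subset)
  then obtain q where q: "norm q = r" and qmax: "\<And>y. norm y = r \<Longrightarrow> g y \<le> g q" by auto
  have M: "g q < 0" using q r gneg by auto
  have big: "g z \<le> g q" if z: "norm z \<ge> r" for z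
  proof -
    define c where "c = r / norm z"
    have zpos: "norm z > 0" using z r by linarith
    have c0: "c \<ge> 0" "c \<le> 1" using zpos z r by (auto simp: c_def divide_simps)
    have "g ((1 - c) *\<^sub>R 0 + c *\<^sub>R z) \<ge> (1 - c) * g 0 + c * g z"
      using concave_onD[OF conc c0, of 0 z] by simp
    then have "c * g z \<le> g (c *\<^sub>R z)" using g0 by simp
    also have "\<dots> \<le> g q" apply (rule qmax) using zpos c0 r by (simp add: c_def)
    finally have 1: "c * g z \<le> g q" .
    have "g z \<le> 0" using gneg[of z] g0 by (cases "z = 0") auto
    then have "g z \<le> c * g z" using c0 by (simp add: mult_le_cancel_right1)
    then show ?thesis using 1 by linarith
  qed
  have "eventually (\<lambda>t. g (p t) > g q) sequentially"
    using order_tendstoD(1)[OF lim M] .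
  then show "eventually (\<lambda>t. dist (p t) 0 < r) sequentially"
  proof (rule eventually_mono)
    fix t assume "g (p t) > g q"
    then have "\<not> norm (p t) \<ge> r" using big by force
    then show "dist (p t) 0 < r" by simp
  qed
qed

lemma perturb:
  assumes opt: "agent_optimal f h A B a x0 lam u e" and v: "v \<le> a t - h (u t)"
  shows "lam t * v \<le> lam t * e t"
proof -
  define e' where "e' = e(t := v)"
  have feas: "agent_feasible h a u e'"
    using opt v by (auto simp: agent_optimal_def agent_feasible_def e'_def)
  have eq: "agent_obj f A B x0 lam u e' = (\<lambda>s. agent_obj f A B x0 lam u e s +
       (if s = t then lam t * (v - e t) else 0))"
    by (auto simp: agent_obj_def e'_def algebra_simps)
  have s1: "summable (agent_obj f A B x0 lam u e)" using opt by (simp add: agent_optimal_def)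
  have s2: "(\<lambda>s. if s = t then lam t * (v - e t) else 0) sums (lam t * (v - e t))"
    using sums_single[of t "\<lambda>_. lam t * (v - e t)"] by simp
  have sm: "agent_obj f A B x0 lam u e' sums (suminf (agent_obj f A B x0 lam u e) + lam t * (v - e t))"
    unfolding eq using sums_add[OF summable_sums[OF s1] s2] .
  then have "suminf (agent_obj f A B x0 lam u e') \<le> suminf (agent_obj f A B x0 lam u e)"
    using opt feas sums_summable[OF sm] by (auto simp: agent_optimal_def)
  then have "lam t * (v - e t) \<le> 0" using sums_unique[OF sm] by simp
  then show ?thesis by (simp add: algebra_simps)
qed

theorem theorem8:
  fixes f :: "'i::finite \<Rightarrow> real^'d \<Rightarrow> real^'m \<Rightarrow> real"
    and h :: "'i \<Rightarrow> real^'m \<Rightarrow> real"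
    and A :: "'i \<Rightarrow> real^'d^'d" and B :: "'i \<Rightarrow> real^'m^'d"
    and a :: "'i \<Rightarrow> nat \<Rightarrow> real"
    and x0 :: "'i \<Rightarrow> real^'d"
    and lam :: "nat \<Rightarrow> real"
    and U :: "'i \<Rightarrow> nat \<Rightarrow> real^'m" and E :: "'i \<Rightarrow> nat \<Rightarrow> real"
  assumes f_concave: "\<And>i. concave_on UNIV (\<lambda>p. f i (fst p) (snd p))"
    and f_zero: "\<And>i. f i 0 0 = 0"
    and f_neg: "\<And>i x u. (x, u) \<noteq> (0, 0) \<Longrightarrow> f i x u < 0"
    and h_nonneg: "\<And>i u. h i u \<ge> 0"
    and h_convex: "\<And>i. convex_on UNIV (h i)"
    and h_zero: "\<And>i. h i 0 = 0"
    and C_bound: "\<exists>C>0. \<forall>t. (\<Sum>i\<in>UNIV. a i t) \<ge> C"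
    and x0_feasible: "feasible_init f h A B a x0"
    and equilibrium: "competitive_equilibrium f h A B a x0 lam U E"
  shows "\<exists>N. \<forall>t>N. lam t = 0"
proof -
  obtain C where C: "C > 0" "\<And>t. (\<Sum>i\<in>UNIV. a i t) \<ge> C" using C_bound by auto
  have opt: "\<And>i. agent_optimal (f i) (h i) (A i) (B i) (a i) (x0 i) lam (U i) (E i)"
    and bal: "\<And>t. (\<Sum>i\<in>UNIV. E i t) = 0"
    using equilibrium by (auto simp: competitive_equilibrium_def)
  have feas: "\<And>i t. E i t \<le> a i t - h i (U i t)"
    using opt by (auto simp: agent_optimal_def agent_feasible_def)
  have lam_nn: "lam t \<ge> 0" for t
  proof -
    have "lam t * (E undefined t - 1) \<le> lam t * E undefined t"
      apply (rule perturb[OF opt]) using feas[of undefined t] by simp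
    then show ?thesis by (simp add: algebra_simps)
  qed
  have bind: "E i t = a i t - h i (U i t)" if "lam t > 0" for i t
  proof -
    have "lam t * (a i t - h i (U i t)) \<le> lam t * E i t"
      by (rule perturb[OF opt]) simp
    then have "a i t - h i (U i t) \<le> E i t" using that by simp
    then show ?thesis using feas[of i t] by linarith
  qed
  define F where "F i t = f i (traj (A i) (B i) (x0 i) (U i) t) (U i t)" for i t
  have Fnp: "F i t \<le> 0" for i t
    using f_neg[of "traj (A i) (B i) (x0 i) (U i) t" "U i t" i] f_zero[of i]
    unfolding F_def by (cases "(traj (A i) (B i) (x0 i) (U i) t, U i t) = (0, 0)") auto
  have "summable (\<lambda>t. \<Sum>i\<in>UNIV. agent_obj (f i) (A i) (B i) (x0 i) lam (U i) (E i) t)"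
    using opt by (intro summable_sum) (auto simp: agent_optimal_def)
  moreover have "(\<Sum>i\<in>UNIV. agent_obj (f i) (A i) (B i) (x0 i) lam (U i) (E i) t) = (\<Sum>i\<in>UNIV. F i t)" for t
  proof -
    have "(\<Sum>i\<in>UNIV. agent_obj (f i) (A i) (B i) (x0 i) lam (U i) (E i) t)
        = (\<Sum>i\<in>UNIV. F i t) + lam t * (\<Sum>i\<in>UNIV. E i t)"
      by (simp add: agent_obj_def F_def sum.distrib sum_distrib_left)
    then show ?thesis using bal by simp
  qed
  ultimately have "summable (\<lambda>t. \<Sum>i\<in>UNIV. F i t)" by simp
  then have Slim: "(\<lambda>t. \<Sum>i\<in>UNIV. F i t) \<longlonglongrightarrow> 0" by (rule summable_LIMSEQ_zero)
  have Flim: "(\<lambda>t. F i t) \<longlonglongrightarrow> 0" for i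
  proof (rule tendsto_sandwich[OF _ _ Slim tendsto_const])
    show "eventually (\<lambda>t. (\<Sum>i\<in>UNIV. F i t) \<le> F i t) sequentially"
    proof (rule always_eventually, rule allI)
      fix t
      have "- F i t \<le> (\<Sum>j\<in>UNIV. - F j t)"
        by (rule member_le_sum) (auto simp: Fnp)
      then show "(\<Sum>i\<in>UNIV. F i t) \<le> F i t" by (simp add: sum_negf)
    qed
    show "eventually (\<lambda>t. F i t \<le> 0) sequentially" using Fnp by simp
  qed
  have Ulim: "(\<lambda>t. U i t) \<longlonglongrightarrow> 0" for i
  proof -
    let ?p = "\<lambda>t. (traj (A i) (B i) (x0 i) (U i) t, U i t)"
    have "?p \<longlonglongrightarrow> 0"
    proof (rule concave_negdef_tendsto[where g = "\<lambda>p. f i (fst p) (snd p)"])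
      show "concave_on UNIV (\<lambda>p. f i (fst p) (snd p))" by (rule f_concave)
      show "f i (fst 0) (snd 0) = 0" using f_zero by simp
      show "f i (fst z) (snd z) < 0" if "z \<noteq> 0" for z :: "(real^'d) \<times> (real^'m)"
        using that f_neg[of "fst z" "snd z" i] by (cases z) (auto simp: zero_prod_def)
      show "(\<lambda>t. f i (fst (?p t)) (snd (?p t))) \<longlonglongrightarrow> 0" using Flim[of i] by (simp add: F_def)
    qed
    from tendsto_snd[OF this] show ?thesis by simp
  qed
  have hlim: "(\<lambda>t. h i (U i t)) \<longlonglongrightarrow> 0" for i
  proof -
    have "continuous_on UNIV (h i)" using h_convex by (intro convex_on_continuous) auto
    then have "isCont (h i) 0" by (simp add: continuous_on_eq_continuous_at)
    from isCont_tendsto_compose[OF this Ulim[of i]] show ?thesis using h_zero by simp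
  qed
  have "(\<lambda>t. \<Sum>i\<in>UNIV. h i (U i t)) \<longlonglongrightarrow> 0"
    using tendsto_sum[of UNIV "\<lambda>i t. h i (U i t)" "\<lambda>i. 0"] hlim by simp
  then have "eventually (\<lambda>t. (\<Sum>i\<in>UNIV. h i (U i t)) < C) sequentially"
    using C(1) by (intro order_tendstoD(2)) auto
  then obtain N where N: "\<And>t. t \<ge> N \<Longrightarrow> (\<Sum>i\<in>UNIV. h i (U i t)) < C"
    by (auto simp: eventually_sequentially)
  show ?thesis
  proof (intro exI allI impI)
    fix t assume "t > N"
    show "lam t = 0"
    proof (rule ccontr)
      assume "lam t \<noteq> 0"
      then have lp: "lam t > 0" using lam_nn[of t] by linarith
      have "0 = (\<Sum>i\<in>UNIV. E i t)" using bal by simp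
      also have "\<dots> = (\<Sum>i\<in>UNIV. a i t - h i (U i t))" using bind[OF lp] by simp
      also have "\<dots> = (\<Sum>i\<in>UNIV. a i t) - (\<Sum>i\<in>UNIV. h i (U i t))" by (simp add: sum_subtractf)
      finally show False using N[of t] C(2)[of t] \<open>t > N\<close> by linarith
    qed
  qed
qed

end
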